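(* Let $(\bar\alpha,\bar\beta)$ be a strict shifted pair of partitions and put $M=l(\bar\alpha)-l(\bar\beta)$. Define $g_1=0$ and, for $2\le i\le l(\bar\alpha)$, $g_i=(i-2)-\#\{j:\ \bar\beta_j\ge\bar\alpha_i\}$. Then every integer $t$ with $0\le t\le M-2$ occurs as some $g_i$, and setting $s_t=\min\{\bar\alpha_i:\ g_i=t\}$ we have $s_0\ge s_1\ge\cdots\ge s_{M-2}$.
   Context: A partition is a finite nonincreasing sequence of positive integers (possibly empty); $l(\lambda)$ is its number of parts. A pair of partitions $(\alpha,\beta)$ is strict shifted if $l(\alpha)>l(\beta)$ and $\alpha_{i+1}>\beta_i$ for $1\le i\le l(\beta)$. *)

theory Defs
  imports Main
begin

text \<open>A partition is a list of positive naturals in nonincreasing order.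
  Parts are 1-indexed in the paper: lambda_i = lam ! (i - 1).\<close>

definition is_partition :: "nat list \<Rightarrow> bool" where
  "is_partition lam \<longleftrightarrow> sorted_wrt (\<ge>) lam \<and> (\<forall>x\<in>set lam. 0 < x)"

definition part :: "nat list \<Rightarrow> nat \<Rightarrow> nat" where
  "part lam i = lam ! (i - 1)"

definition strict_shifted :: "nat list \<Rightarrow> nat list \<Rightarrow> bool" where
  "strict_shifted a b \<longleftrightarrow> is_partition a \<and> is_partition b \<and> length a > length b \<and>
     (\<forall>i. 1 \<le> i \<and> i \<le> length b \<longrightarrow> part a (i + 1) > part b i)"

definition gval :: "nat list \<Rightarrow> nat list \<Rightarrow> nat \<Rightarrow> int" where
  "gval a b i = (if i = 1 then 0
     else (int i - 2) - int (card {j. 1 \<le> j \<and> j \<le> length b \<and> part b j \<ge> part a i}))"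

definition sval :: "nat list \<Rightarrow> nat list \<Rightarrow> int \<Rightarrow> nat" where
  "sval a b t = Min {part a i | i. 1 \<le> i \<and> i \<le> length a \<and> gval a b i = t}"

end

theory Submission
  imports Defs
begin

lemma ivt_step:
  fixes f :: "nat \<Rightarrow> int"
  assumes "\<forall>i. k \<le> i \<and> i < n \<longrightarrow> f (Suc i) \<le> f i + 1"
    and "f k \<le> t" and "t \<le> f n" and "k \<le> n"
  shows "\<exists>j. k \<le> j \<and> j \<le> n \<and> f j = t"
  using assms
proof (induction n)
  case 0
  then show ?case by auto
next
  case (Suc n)
  show ?case
  proof (cases "k = Suc n")
    case True
    then show ?thesis using Suc.prems by auto
  next
    case False
    hence kn: "k \<le> n" using Suc.prems by auto
    show ?thesis
    proof (cases "t \<le> f n")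
      case True
      from Suc.IH[OF _ Suc.prems(2) True kn] Suc.prems(1) obtain j where "k \<le> j \<and> j \<le> n \<and> f j = t" by auto
      then show ?thesis by (intro exI[of _ j]) auto
    next
      case False
      have "f (Suc n) \<le> f n + 1" using Suc.prems(1) kn by auto
      hence "f (Suc n) = t" using False Suc.prems(3) by auto
      then show ?thesis using kn by (intro exI[of _ "Suc n"]) auto
    qed
  qed
qed

lemma card_sub_le:
  fixes b :: "nat list" and P :: "nat \<Rightarrow> bool"
  shows "card {j. 1 \<le> j \<and> j \<le> length b \<and> P j} \<le> length b"
proof -
  have "{j. 1 \<le> j \<and> j \<le> length b \<and> P j} \<subseteq> {1..length b}" by auto
  hence "card {j. 1 \<le> j \<and> j \<le> length b \<and> P j} \<le> card {1..length b}"
    by (intro card_mono) auto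
  thus ?thesis by simp
qed

lemma part_mono:
  assumes "is_partition a" "1 \<le> i" "i \<le> k" "k \<le> length a"
  shows "part a k \<le> part a i"
proof (cases "i = k")
  case True then show ?thesis by simp
next
  case False
  have "sorted_wrt (\<ge>) a" using assms(1) unfolding is_partition_def by auto
  hence "a ! (i - 1) \<ge> a ! (k - 1)"
    using False assms by (auto simp: sorted_wrt_iff_nth_less)
  thus ?thesis unfolding part_def by simp
qed

lemma g_step:
  assumes "is_partition a" "1 \<le> i" "i < length a"
  shows "gval a b (Suc i) \<le> gval a b i + 1"
proof (cases "i = 1")
  case True
  then show ?thesis unfolding gval_def by simp
next
  case False
  have pm: "part a (Suc i) \<le> part a i" using part_mono[OF assms(1) assms(2)] assms(3) by auto
  have "{j. 1 \<le> j \<and> j \<le> length b \<and> part b j \<ge> part a i} \<subseteq>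
        {j. 1 \<le> j \<and> j \<le> length b \<and> part b j \<ge> part a (Suc i)}" using pm by auto
  hence "card {j. 1 \<le> j \<and> j \<le> length b \<and> part b j \<ge> part a i} \<le>
        card {j. 1 \<le> j \<and> j \<le> length b \<and> part b j \<ge> part a (Suc i)}"
    by (intro card_mono) auto
  then show ?thesis using False assms(2) unfolding gval_def by simp
qed

lemma g_last:
  assumes "1 \<le> length a"
  shows "gval a b (length a) \<ge> int (length a) - int (length b) - 2"
  using card_sub_le[of b "\<lambda>j. part b j \<ge> part a (length a)"]
  unfolding gval_def by auto

theorem mainTheorem6:
  fixes a b :: "nat list"
  assumes "strict_shifted a b"
  defines "M \<equiv> int (length a) - int (length b)"
  shows "(\<forall>t::int. 0 \<le> t \<and> t \<le> M - 2 \<longrightarrow>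
            (\<exists>i. 1 \<le> i \<and> i \<le> length a \<and> gval a b i = t))
       \<and> (\<forall>t::int. 0 \<le> t \<and> t + 1 \<le> M - 2 \<longrightarrow> sval a b t \<ge> sval a b (t + 1))"
proof -
  have pa: "is_partition a" and len: "length a > length b"
    using assms(1) unfolding strict_shifted_def by auto
  have n1: "1 \<le> length a" using len by auto
  have steps: "\<forall>i. k \<le> i \<and> i < length a \<longrightarrow> gval a b (Suc i) \<le> gval a b i + 1"
    if "1 \<le> k" for k using g_step[OF pa] that by auto
  have gl: "gval a b (length a) \<ge> M - 2" using g_last[OF n1] unfolding M_def by simp
  have ivt: "\<exists>j. k \<le> j \<and> j \<le> length a \<and> gval a b j = t"
    if "1 \<le> k" "k \<le> length a" "gval a b k \<le> t" "t \<le> M - 2" for k t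
    using ivt_step[OF steps[OF that(1)] that(3) _ that(2)] gl that(4) by auto
  have P1: "\<forall>t::int. 0 \<le> t \<and> t \<le> M - 2 \<longrightarrow>
            (\<exists>i. 1 \<le> i \<and> i \<le> length a \<and> gval a b i = t)"
  proof (intro allI impI)
    fix t :: int assume "0 \<le> t \<and> t \<le> M - 2"
    then show "\<exists>i. 1 \<le> i \<and> i \<le> length a \<and> gval a b i = t"
      using ivt[of 1 t] n1 by (auto simp: gval_def)
  qed
  have P2: "\<forall>t::int. 0 \<le> t \<and> t + 1 \<le> M - 2 \<longrightarrow> sval a b t \<ge> sval a b (t + 1)"
  proof (intro allI impI)
    fix t :: int assume t: "0 \<le> t \<and> t + 1 \<le> M - 2"
    define S where "S = {part a i | i. 1 \<le> i \<and> i \<le> length a \<and> gval a b i = t}"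
    define S' where "S' = {part a i | i. 1 \<le> i \<and> i \<le> length a \<and> gval a b i = t + 1}"
    have finS: "finite S"
      by (rule finite_subset[of _ "part a ` {1..length a}"]) (auto simp: S_def)
    have finS': "finite S'"
      by (rule finite_subset[of _ "part a ` {1..length a}"]) (auto simp: S'_def)
    have "S \<noteq> {}" using P1 t unfolding S_def by fastforce
    hence "Min S \<in> S" using finS by simp
    then obtain k where k: "1 \<le> k" "k \<le> length a" "gval a b k = t" "Min S = part a k"
      unfolding S_def by auto
    obtain j where j: "k \<le> j" "j \<le> length a" "gval a b j = t + 1"
      using ivt[of k "t+1"] k t by auto
    have "part a j \<in> S'" unfolding S'_def using j k by auto
    hence "Min S' \<le> part a j" using finS' by simp
    also have "\<dots> \<le> part a k" using part_mono[OF pa k(1) j(1) j(2)] .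
    finally show "sval a b t \<ge> sval a b (t + 1)"
      unfolding sval_def using k(4) S_def S'_def by simp
  qed
  show ?thesis using P1 P2 by blast
qed

end
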